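(* Let $f:(0,\infty)\to(0,\infty)$ be non-increasing, let $a\ge0$, $b>0$, $c>0$, and define \[ F(r):=\int_0^\infty t^{-a}e^{-b^2t}e^{-\frac{r^2}{c^2t}}f(t)\,dt,\qquad r>0. \] If $t\mapsto t^2f(t)$ is non-decreasing, then \[ F(r)\asymp r^{-a+\frac12}\,f\!\left(\tfrac{r}{bc}\right)e^{-2bc^{-1}r}\quad\text{for all } r\ge1. \]
   Context: $g(r)\asymp h(r)$ for $r\in I$ means that $g(r)/h(r)$ stays between two positive constants (depending on $a,b,c,f$ but not on $r$) for all $r\in I$. *)

theory Defs
  imports "HOL-Analysis.Analysis"
begin

definition integrandA1 :: "real \<Rightarrow> real \<Rightarrow> real \<Rightarrow> (real \<Rightarrow> real) \<Rightarrow> real \<Rightarrow> real \<Rightarrow> real" where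
  "integrandA1 a b c f r t =
     t powr (-a) * exp (- (b\<^sup>2 * t)) * exp (- (r\<^sup>2 / (c\<^sup>2 * t))) * f t"

definition FA1 :: "real \<Rightarrow> real \<Rightarrow> real \<Rightarrow> (real \<Rightarrow> real) \<Rightarrow> real \<Rightarrow> real" where
  "FA1 a b c f r = (LBINT t:{0<..}. integrandA1 a b c f r t)"

end

theory Submission
  imports Defs "HOL-Real_Asymp.Real_Asymp"
begin


lemma poly_exp_bound:
  fixes x :: real assumes "x \<ge> 0" "n > 0"
  shows "(1 + x) ^ n \<le> real n ^ n * exp x"
proof -
  have "(1 + x) ^ n \<le> (real n * (1 + x / real n)) ^ n"
    using assms by (intro power_mono) (auto simp: field_simps)
  also have "\<dots> = real n ^ n * (1 + x / real n) ^ n" by (simp add: power_mult_distrib)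
  also have "\<dots> \<le> real n ^ n * exp x"
    using assms by (intro mult_left_mono exp_ge_one_plus_x_over_n_power_n) auto
  finally show ?thesis .
qed

lemma one_plus_exp: fixes x :: real assumes "x \<ge> 0" shows "(1 + x) * exp (-x) \<le> 1"
proof -
  have "1 + x \<le> exp x" by (rule exp_ge_add_one_self)
  then show ?thesis by (simp add: exp_minus field_simps)
qed

lemma sq_exp: fixes x :: real assumes "x \<ge> 0" shows "(1 + x)^2 * exp (-x) \<le> 4"
  using poly_exp_bound[OF assms, of 2] by (simp add: exp_minus field_simps)

lemma powN_exp: fixes x :: real assumes "x \<ge> 0" shows "(1 + x)^(Suc N) * exp (-x) \<le> real (Suc N) ^ (Suc N)"
  using poly_exp_bound[OF assms, of "Suc N"] by (simp add: exp_minus field_simps del: of_nat_Suc)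



lemma sqrt_le_self: fixes u :: real assumes "1 \<le> u" shows "sqrt u \<le> u"
proof -
  have "sqrt u * 1 \<le> sqrt u * sqrt u" using assms by (intro mult_left_mono real_sqrt_ge_one) auto
  then show ?thesis using assms by simp
qed

lemma powr_neg_inv: fixes u a :: real assumes "u > 0" shows "u powr (-a) = (1/u) powr a"
  using assms by (subst powr_divide) (auto simp: powr_minus_divide)

lemma core_u:
  fixes L a :: real
  assumes L: "L > 0" and a: "a \<ge> 0"
  shows "\<exists>K>0. \<forall>u>0. \<forall>l\<ge>L. u powr (-a) * (if 1 \<le> u then 1 else 1/u^2)
     * ((1 + l*(u-1)^2/u) * exp (-(l*(u-1)^2/u))) * (2*u* sqrt u/(u+1)) \<le> K"
proof -
  define N where "N = nat \<lceil>a\<rceil>"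
  have aN: "a \<le> real N" unfolding N_def by linarith
  define K where "K = 4 + 16/L + 32 * 4 powr a + 2 * (2/L)^(Suc N) * real (Suc (Suc N)) ^ (Suc (Suc N))"
  have K0: "K > 0" unfolding K_def using L by (auto intro!: add_pos_nonneg)
  have main: "u powr (-a) * (if 1 \<le> u then 1 else 1/u^2)
     * ((1 + l*(u-1)^2/u) * exp (-(l*(u-1)^2/u))) * (2*u* sqrt u/(u+1)) \<le> K"
    if u: "u > 0" and l: "l \<ge> L" for u l
  proof -
    define x where "x = l*(u-1)^2/u"
    have x0: "x \<ge> 0" unfolding x_def using u l L by auto
    define E where "E = (1 + x) * exp (-x)"
    have E0: "E \<ge> 0" unfolding E_def using x0 by auto
    have E1: "E \<le> 1" unfolding E_def using one_plus_exp[OF x0] .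
    have pa0: "u powr (-a) \<ge> 0" by simp
    have Q0: "2*u* sqrt u/(u+1) \<ge> 0" using u by auto
    have K1: "4 \<le> K" "16/L \<le> K" "32 * 4 powr a \<le> K" "2 * (2/L)^(Suc N) * real (Suc (Suc N)) ^ (Suc (Suc N)) \<le> K"
      unfolding K_def using L by auto
    have "u powr (-a) * (if 1 \<le> u then 1 else 1/u^2) * E * (2*u* sqrt u/(u+1)) \<le> K"
    proof (cases "1 \<le> u")
      case True
      have pa: "u powr (-a) \<le> 1" using True a by (simp add: powr_minus divide_simps ge_one_powr_ge_zero)
      have sq: "sqrt u \<le> u" using True by (rule sqrt_le_self)
      have Q: "2*u* sqrt u/(u+1) \<le> 2 * sqrt u" using u by (simp add: divide_simps)
      have lhs: "u powr (-a) * (if 1 \<le> u then 1 else 1/u^2) * E * (2*u* sqrt u/(u+1)) \<le> E * (2 * sqrt u)"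
      proof -
        have "u powr (-a) * (if 1 \<le> u then 1 else 1/u^2) * E * (2*u* sqrt u/(u+1)) = (u powr (-a)) * (E * (2*u* sqrt u/(u+1)))"
          using True by simp
        also have "\<dots> \<le> 1 * (E * (2 * sqrt u))"
          by (intro mult_mono pa mult_left_mono Q E0 mult_nonneg_nonneg Q0) auto
        finally show ?thesis by simp
      qed
      show ?thesis
      proof (cases "u \<le> 4")
        case True
        have "sqrt u \<le> 2" using True by (metis real_sqrt_four real_sqrt_le_iff)
        hence "E * (2 * sqrt u) \<le> 1 * 4" using E0 E1 u by (intro mult_mono) auto
        then show ?thesis using lhs K1 by linarith
      next
        case False
        have "(u-1)^2 \<ge> u^2/2"
        proof -
          have h: "0 \<le> u * (u-4)" using False by simp
          have "2*(u-1)^2 - u^2 = u * (u-4)+2" by (simp add: power2_eq_square field_simps)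
          then show ?thesis using h by linarith
        qed
        hence "x \<ge> l * (u^2/2) / u" unfolding x_def using u l L by (intro divide_right_mono mult_left_mono) auto
        hence "x \<ge> l * u / 2" using u by (simp add: power2_eq_square)
        moreover have "l * u \<ge> L * u" using l u by (intro mult_right_mono) auto
        ultimately have ux: "u \<le> 2 * x / L" using L by (simp add: field_simps)
        have "E * (2 * sqrt u) \<le> E * (2 * u)" using sq E0 by (intro mult_left_mono) auto
        also have "\<dots> \<le> E * (2 * (2 * x / L))" using ux E0 by (intro mult_left_mono) auto
        also have "\<dots> = (4/L) * (x * (1+x) * exp (-x))" unfolding E_def by (simp add: field_simps)
        also have "\<dots> \<le> (4/L) * ((1+x)^2 * exp (-x))"
          using x0 L by (intro mult_left_mono mult_right_mono) (auto simp: power2_eq_square)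
        also have "\<dots> \<le> (4/L) * 4" using sq_exp[OF x0] L by (intro mult_left_mono) auto
        finally show ?thesis using lhs K1 by simp
      qed
    next
      case False
      hence u1: "u < 1" by simp
      have m: "(if 1 \<le> u then 1 else 1/u^2) = 1/u^2" using False by simp
      have sq: "sqrt u \<le> 1" using u1 by simp
      have Q: "2*u* sqrt u/(u+1) \<le> 2*u* sqrt u" using u by (simp add: divide_simps)
      show ?thesis
      proof (cases "u \<ge> 1/4")
        case True
        have pa: "u powr (-a) \<le> 4 powr a"
        proof -
          have "u powr (-a) = (1/u) powr a" using u by (rule powr_neg_inv)
          also have "\<dots> \<le> 4 powr a" using True u a by (intro powr_mono2) (auto simp: field_simps)
          finally show ?thesis .
        qed
        have mm: "1/u^2 \<le> 16"
        proof -
          have "1/u \<le> 4" using True u by (simp add: field_simps)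
          hence "(1/u)^2 \<le> 4^2" by (rule power_mono) (use u in auto)
          thus ?thesis by (simp add: power_divide)
        qed
        have Q2: "2*u* sqrt u/(u+1) \<le> 2"
        proof -
          have "u * sqrt u \<le> 1" using u1 sq u by (intro mult_le_one) auto
          hence "2*u* sqrt u \<le> 2" by (simp add: mult.assoc)
          thus ?thesis using Q by linarith
        qed
        have "u powr (-a) * (1/u^2) * E * (2*u* sqrt u/(u+1)) \<le> 4 powr a * 16 * 1 * 2"
          by (intro mult_mono pa mm E1 Q2) (use E0 u Q0 in auto)
        then show ?thesis using m K1 by simp
      next
        case False
        define v where "v = 1/u"
        have v4: "v > 4" unfolding v_def using False u by (simp add: field_simps)
        have xv: "x = l * (v-1)^2/v" unfolding x_def v_def using u by (simp add: field_simps power2_eq_square)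
        have "(v-1)^2 \<ge> v^2/2"
        proof -
          have h: "0 \<le> v * (v-4)" using v4 by simp
          have "2*(v-1)^2 - v^2 = v * (v-4)+2" by (simp add: power2_eq_square field_simps)
          then show ?thesis using h by linarith
        qed
        hence "x \<ge> l * (v^2/2) / v" unfolding xv using v4 l L by (intro divide_right_mono mult_left_mono) auto
        hence "x \<ge> l * v / 2" using v4 by (simp add: power2_eq_square)
        moreover have "l * v \<ge> L * v" using l v4 by (intro mult_right_mono) auto
        ultimately have vx: "v \<le> 2 * x / L" using L by (simp add: field_simps)
        have eq1: "u powr (-a) = v powr a" unfolding v_def using u by (rule powr_neg_inv)
        have eq2: "(1/u^2) * (2*u* sqrt u) = 2 * sqrt v" unfolding v_def using u
          by (simp add: real_sqrt_divide field_simps power2_eq_square)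
        have vp: "v powr a \<le> v ^ N" using v4 aN by (subst powr_realpow[symmetric]) (auto intro!: powr_mono)
        have sv: "sqrt v \<le> v" using v4 by (intro sqrt_le_self) auto
        have "u powr (-a) * (1/u^2) * E * (2*u* sqrt u/(u+1)) \<le> u powr (-a) * (1/u^2) * E * (2*u* sqrt u)"
          using Q E0 u by (intro mult_left_mono) auto
        also have "\<dots> = v powr a * (2 * sqrt v) * E" using u by (subst eq1, subst eq2[symmetric]) (simp add: field_simps)
        also have "\<dots> \<le> v ^ N * (2 * v) * E" using vp sv E0 v4
          by (intro mult_right_mono mult_mono) auto
        also have "\<dots> = 2 * v ^ (Suc N) * E" by simp
        also have "\<dots> \<le> 2 * (2 * x / L) ^ (Suc N) * E"
          using vx v4 E0 by (intro mult_right_mono mult_left_mono power_mono) auto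
        also have "\<dots> = 2 * (2/L)^(Suc N) * (x ^ Suc N * (1 + x) * exp (-x))"
          unfolding E_def by (simp add: power_mult_distrib power_divide field_simps)
        also have "\<dots> \<le> 2 * (2/L)^(Suc N) * ((1 + x) ^ Suc (Suc N) * exp (-x))"
        proof -
          have "x ^ Suc N \<le> (1 + x) ^ Suc N" using x0 by (intro power_mono) auto
          hence "x ^ Suc N * (1 + x) \<le> (1 + x) ^ Suc N * (1 + x)" using x0 by (intro mult_right_mono) auto
          hence "x ^ Suc N * (1 + x) \<le> (1 + x) ^ Suc (Suc N)" by (simp only: power_Suc2)
          thus ?thesis using x0 L by (intro mult_left_mono mult_right_mono) auto
        qed
        also have "\<dots> \<le> 2 * (2/L)^(Suc N) * real (Suc (Suc N)) ^ (Suc (Suc N))"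
          using powN_exp[OF x0, of "Suc N"] L by (intro mult_left_mono) auto
        finally show ?thesis using m K1 by simp
      qed
    qed
    then show ?thesis by (simp add: E_def x_def)
  qed
  show ?thesis using K0 main by blast
qed



definition Aprime :: "real \<Rightarrow> real \<Rightarrow> real \<Rightarrow> real" where
  "Aprime b s t = (t+s)/(2*t* sqrt t*(1 + b^2*(t-s)^2/t))"

lemma Aderiv:
  assumes b: "b > 0" and s: "s > 0" and t: "t > 0"
  shows "((\<lambda>t. arctan (b*(t-s)/sqrt t)/b) has_real_derivative Aprime b s t) (at t)"
proof -
  have st: "sqrt t > 0" using t by simp
  have e1: "(b*(t-s)/sqrt t)^2 = b^2*(t-s)^2/t" using t by (simp add: power_mult_distrib power_divide)
  have pos: "1 + b^2*(t-s)^2/t > 0" using t by (simp add: add_pos_nonneg)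
  have st2: "\<And>X. sqrt t * (sqrt t * X) = t * X" using t by (simp add: mult.assoc[symmetric])
  have "((\<lambda>t. arctan (b*(t-s)/sqrt t)/b) has_real_derivative Aprime b s t) (at t)"
    using t st b
    apply (auto intro!: derivative_eq_intros)[1]
    unfolding e1 Aprime_def using pos t st b
    by (simp add: field_simps st2) (simp only: distrib_left[symmetric] mult_divide_mult_cancel_left_if, simp)
  then show ?thesis .
qed

lemma Aprime_nonneg: "b > 0 \<Longrightarrow> s > 0 \<Longrightarrow> t > 0 \<Longrightarrow> Aprime b s t \<ge> 0"
  unfolding Aprime_def by (auto intro!: divide_nonneg_pos mult_pos_pos add_pos_nonneg)

lemma Aprime_integral:
  assumes b: "b > 0" and s: "s > 0"
  shows "set_integrable lborel {0<..} (Aprime b s)" "(LBINT t:{0<..}. Aprime b s t) = pi / b"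
proof -
  have lim0: "((\<lambda>t. arctan (b*(t-s)/sqrt t)/b) \<longlongrightarrow> (-(pi/2))/b) (at_right 0)"
  proof -
    have "filterlim (\<lambda>t. b*(t-s)/sqrt t) at_bot (at_right 0)" using b s by real_asymp
    hence "((\<lambda>t. arctan (b*(t-s)/sqrt t)) \<longlongrightarrow> -(pi/2)) (at_right 0)"
      by (rule filterlim_compose[OF tendsto_arctan_at_bot])
    thus ?thesis using b by (intro tendsto_divide tendsto_const) auto
  qed
  have limi: "((\<lambda>t. arctan (b*(t-s)/sqrt t)/b) \<longlongrightarrow> (pi/2)/b) at_top"
  proof -
    have "filterlim (\<lambda>t. b*(t-s)/sqrt t) at_top at_top" using b s by real_asymp
    hence "((\<lambda>t. arctan (b*(t-s)/sqrt t)) \<longlongrightarrow> pi/2) at_top"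
      by (rule filterlim_compose[OF tendsto_arctan_at_top])
    thus ?thesis using b by (intro tendsto_divide tendsto_const) auto
  qed
  note ftc = interval_integral_FTC_nonneg[where a="ereal 0" and b="\<infinity>" and f="Aprime b s"
      and F="\<lambda>t. arctan (b*(t-s)/sqrt t)/b" and A="(-(pi/2))/b" and B="(pi/2)/b"]
  have cont: "isCont (Aprime b s) x" if "0 < x" for x
  proof -
    have pos: "1 + b^2*(x-s)^2/x > 0" using that by (simp add: add_pos_nonneg)
    show ?thesis
    unfolding Aprime_def using that b by (auto intro!: continuous_intros) (use pos in simp)
  qed
  have H: "set_integrable lborel (einterval (ereal 0) \<infinity>) (Aprime b s) \<and>
      (LBINT x=ereal 0..\<infinity>. Aprime b s x) = pi/2/b - - (pi / 2) / b"
    apply (intro conjI ftc)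
    using b s lim0 limi by (auto intro!: Aderiv cont Aprime_nonneg simp: ereal_tendsto_simps)
  show "set_integrable lborel {0<..} (Aprime b s)" using H by simp
  show "(LBINT t:{0<..}. Aprime b s t) = pi / b" using H by (simp add: interval_lebesgue_integral_def field_simps)
qed



lemma core_t:
  fixes L a b :: real
  assumes L: "L > 0" and a: "a \<ge> 0" and b: "b > 0"
  shows "\<exists>K>0. \<forall>s>0. \<forall>t>0. b^2* s \<ge> L \<longrightarrow>
    t powr (-a) * (if s \<le> t then 1 else s^2/t^2) * exp (-(b^2*(t-s)^2/t)) \<le> K * s powr (1/2-a) * Aprime b s t"
proof -
  obtain K where K: "K > 0" and HK: "\<And>u l. u > 0 \<Longrightarrow> l \<ge> L \<Longrightarrow> u powr (-a) * (if 1 \<le> u then 1 else 1/u^2)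
     * ((1 + l*(u-1)^2/u) * exp (-(l*(u-1)^2/u))) * (2*u* sqrt u/(u+1)) \<le> K"
    using core_u[OF L a] by blast
  have "t powr (-a) * (if s \<le> t then 1 else s^2/t^2) * exp (-(b^2*(t-s)^2/t)) \<le> K * s powr (1/2-a) * Aprime b s t"
    if s: "s > 0" and t: "t > 0" and l: "b^2* s \<ge> L" for s t
  proof -
    define u where "u = t/s"
    have u: "u > 0" unfolding u_def using s t by simp
    have tu: "t = s*u" unfolding u_def using s by simp
    define x where "x = b^2*(t-s)^2/t"
    have x0: "x \<ge> 0" unfolding x_def using t by simp
    have xu: "b^2* s*(u-1)^2/u = x" unfolding x_def tu using s u
      by (simp add: power2_eq_square field_simps)
    define m where "m = (if 1 \<le> u then 1 else 1/u^2)"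
    have mu: "(if s \<le> t then 1 else s^2/t^2) = m" unfolding m_def tu using s u
      by (simp add: power2_eq_square field_simps)
    define Q where "Q = 2*u* sqrt u/(u+1)"
    have Q0: "Q > 0" unfolding Q_def using u by simp
    define P where "P = u powr (-a) * m * ((1 + x) * exp (-x)) * Q"
    have P: "P \<le> K" unfolding P_def m_def Q_def using HK[OF u l] xu by simp
    have i: "t powr (-a) = s powr (-a) * u powr (-a)" unfolding tu using s u by (simp add: powr_mult)
    have sqt: "sqrt t = sqrt s * sqrt u" unfolding tu by (simp add: real_sqrt_mult)
    have iv: "Aprime b s t = 1 / ((1 + x) * (sqrt s * Q))"
    proof -
      have p1: "1 + x > 0" "sqrt s > 0" "sqrt u > 0" "u + 1 > 0" using x0 s u by auto
      have "Aprime b s t = (s*u + s) / (2*(s*u)*(sqrt s * sqrt u)*(1+x))"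
        unfolding Aprime_def x_def[symmetric] sqt using tu by simp
      also have "\<dots> = (s*(u+1)) / (s*((1+x)*(sqrt s*(2*u* sqrt u))))"
        by (simp add: algebra_simps)
      also have "\<dots> = (u+1) / ((1+x)*(sqrt s*(2*u* sqrt u)))"
        using s by (rule mult_divide_mult_cancel_left[OF less_imp_neq[symmetric]])
      also have "\<dots> = 1 / ((1+x)*(sqrt s*Q))"
        unfolding Q_def using p1 by (simp add: field_simps)
      finally show ?thesis .
    qed
    have v: "s powr (1/2-a) = sqrt s * s powr (-a)" using s
      by (simp add: powr_diff powr_half_sqrt powr_minus_divide)
    have Pe: "P = (u powr (-a) * m * exp (-x)) * ((1+x)*Q)" unfolding P_def by (simp add: ac_simps)
    have nz: "(1+x)*Q \<noteq> 0" using Q0 x0 by simp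
    have lhs: "t powr (-a) * (if s \<le> t then 1 else s^2/t^2) * exp (-(b^2*(t-s)^2/t)) = s powr (-a) * (P / ((1+x)*Q))"
      unfolding i mu x_def[symmetric] Pe using nz by simp
    have rhs: "K * s powr (1/2-a) * Aprime b s t = s powr (-a) * (K / ((1+x)*Q))"
    proof -
      have iv': "Aprime b s t = 1 / (sqrt s * ((1+x)*Q))" unfolding iv by (simp add: ac_simps)
      define D where "D = (1+x)*Q"
      have D: "D \<noteq> 0" "sqrt s \<noteq> 0" using nz s unfolding D_def by auto
      show ?thesis unfolding iv' v D_def[symmetric] using D by (simp add: field_simps)
    qed
    show ?thesis unfolding lhs rhs using P Q0 x0
      by (intro divide_right_mono mult_left_mono) auto
  qed
  then show ?thesis using K by blast
qed



lemma exp_split: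
  fixes b c r t :: real
  assumes b: "b > 0" and c: "c > 0" and r: "r > 0" and t: "t > 0"
  shows "exp (-(b\<^sup>2 * t)) * exp (- (r\<^sup>2 / (c\<^sup>2 * t))) = exp (-(2 * b / c * r)) * exp (-(b^2*(t - r/(b*c))^2/t))"
proof -
  have "-(b\<^sup>2 * t) + - (r\<^sup>2 / (c\<^sup>2 * t)) = -(2 * b / c * r) + -(b^2*(t - r/(b*c))^2/t)"
    using b c r t by (simp add: field_simps power2_eq_square)
  then show ?thesis by (simp add: exp_add[symmetric])
qed

lemma integrand_eq:
  fixes b c r t :: real
  assumes b: "b > 0" and c: "c > 0" and r: "r > 0" and t: "t > 0"
  shows "integrandA1 a b c f r t = exp (-(2 * b / c * r)) * (t powr (-a) * f t * exp (-(b^2*(t - r/(b*c))^2/t)))"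
proof -
  have "integrandA1 a b c f r t = t powr (-a) * f t * (exp (-(b\<^sup>2 * t)) * exp (- (r\<^sup>2 / (c\<^sup>2 * t))))"
    unfolding integrandA1_def by (simp add: ac_simps)
  also have "\<dots> = exp (-(2 * b / c * r)) * (t powr (-a) * f t * exp (-(b^2*(t - r/(b*c))^2/t)))"
    unfolding exp_split[OF b c r t] by (simp add: ac_simps)
  finally show ?thesis .
qed

lemma f_meas:
  fixes f :: "real \<Rightarrow> real"
  assumes "\<forall>s t. 0 < s \<longrightarrow> s \<le> t \<longrightarrow> f t \<le> f s"
  shows "f \<in> borel_measurable (restrict_space lborel {0<..})"
proof -
  have "mono_on {0<..} (\<lambda>x. - f x)" using assms by (auto simp: mono_on_def)
  hence "(\<lambda>x. - f x) \<in> borel_measurable (restrict_space borel {0<..})" by (rule borel_measurable_mono_on_fnc)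
  hence "(\<lambda>x. - (- f x)) \<in> borel_measurable (restrict_space borel {0<..})" by (rule borel_measurable_uminus)
  hence "f \<in> borel_measurable (restrict_space borel {0<..})" by simp
  then show ?thesis
    by (subst measurable_cong_sets[OF sets_restrict_space_cong[OF sets_lborel] refl])
qed

lemma integrand_meas:
  fixes f :: "real \<Rightarrow> real"
  assumes "\<forall>s t. 0 < s \<longrightarrow> s \<le> t \<longrightarrow> f t \<le> f s"
  shows "set_borel_measurable lborel {0<..} (integrandA1 a b c f r)"
  unfolding set_borel_measurable_def
proof (subst borel_measurable_restrict_space_iff[symmetric])
  show "{0::real<..} \<inter> space lborel \<in> sets lborel" by (simp add: greaterThan_borel)
  show "integrandA1 a b c f r \<in> borel_measurable (restrict_space lborel {0<..})"
    unfolding integrandA1_def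
    by (intro borel_measurable_times measurable_restrict_space1 f_meas[OF assms]) measurable
qed



lemma upper_main:
  fixes f :: "real \<Rightarrow> real" and a b c L K r :: real
  assumes f_pos: "\<forall>t>0. f t > 0"
    and f_noninc: "\<forall>s t. 0 < s \<longrightarrow> s \<le> t \<longrightarrow> f t \<le> f s"
    and a: "a \<ge> 0" and b: "b > 0" and c: "c > 0"
    and t2f_nondec: "\<forall>s t. 0 < s \<longrightarrow> s \<le> t \<longrightarrow> s\<^sup>2 * f s \<le> t\<^sup>2 * f t"
    and K: "K > 0"
    and HK: "\<forall>s>0. \<forall>t>0. b^2 * s \<ge> L \<longrightarrow>
    t powr (-a) * (if s \<le> t then 1 else s^2/t^2) * exp (-(b^2*(t-s)^2/t)) \<le> K * s powr (1/2-a) * Aprime b s t"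
    and r: "r > 0" and rL: "L \<le> b^2 * (r/(b*c))"
  shows "set_integrable lborel {0<..} (integrandA1 a b c f r) \<and>
    FA1 a b c f r \<le> exp (-(2*b/c*r)) * f (r/(b*c)) * K * (r/(b*c)) powr (1/2-a) * (pi/b)"
proof -
  define s where "s = r/(b*c)"
  have s: "s > 0" unfolding s_def using r b c by simp
  define C where "C = exp (-(2*b/c*r)) * f s * K * s powr (1/2-a)"
  have C0: "C > 0" unfolding C_def using f_pos s K by simp
  define G where "G = (\<lambda>t. C * Aprime b s t)"
  have Gint: "set_integrable lborel {0<..} G" unfolding G_def
    using Aprime_integral(1)[OF b s] by (intro set_integrable_mult_right) auto
  have pw: "0 \<le> integrandA1 a b c f r t \<and> integrandA1 a b c f r t \<le> G t" if t: "t > 0" for t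
  proof -
    have eq: "integrandA1 a b c f r t = exp (-(2*b/c*r)) * (t powr (-a) * f t * exp (-(b^2*(t - s)^2/t)))"
      unfolding s_def by (rule integrand_eq[OF b c r t])
    have ft: "f t \<le> f s * (if s \<le> t then 1 else s^2/t^2)"
    proof (cases "s \<le> t")
      case True then show ?thesis using f_noninc s by simp
    next
      case False
      hence "t^2 * f t \<le> s^2 * f s" using t2f_nondec t by simp
      then show ?thesis using False t by (simp add: field_simps)
    qed
    have "t powr (-a) * f t * exp (-(b^2*(t - s)^2/t)) \<le> t powr (-a) * (f s * (if s \<le> t then 1 else s^2/t^2)) * exp (-(b^2*(t - s)^2/t))"
      using ft by (intro mult_right_mono mult_left_mono) auto
    also have "\<dots> = f s * (t powr (-a) * (if s \<le> t then 1 else s^2/t^2) * exp (-(b^2*(t-s)^2/t)))"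
      by (simp add: ac_simps)
    also have "\<dots> \<le> f s * (K * s powr (1/2-a) * Aprime b s t)"
    proof -
      have "L \<le> b^2 * s" using rL unfolding s_def .
      hence "t powr (-a) * (if s \<le> t then 1 else s^2/t^2) * exp (-(b^2*(t-s)^2/t)) \<le> K * s powr (1/2-a) * Aprime b s t"
        using HK s t by blast
      thus ?thesis using f_pos s by (intro mult_left_mono) auto
    qed
    finally have "integrandA1 a b c f r t \<le> exp (-(2*b/c*r)) * (f s * (K * s powr (1/2-a) * Aprime b s t))"
      unfolding eq by (intro mult_left_mono) auto
    moreover have "integrandA1 a b c f r t \<ge> 0" unfolding eq using f_pos t by auto
    ultimately show ?thesis unfolding G_def C_def by (simp add: ac_simps)
  qed
  have int: "set_integrable lborel {0<..} (integrandA1 a b c f r)"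
  proof (rule set_integrable_bound[OF Gint integrand_meas[OF f_noninc]])
    show "AE x in lborel. x \<in> {0<..} \<longrightarrow> norm (integrandA1 a b c f r x) \<le> norm (G x)"
      using pw by (intro AE_I2) (force simp: abs_of_nonneg)
  qed
  have "FA1 a b c f r \<le> (LBINT t:{0<..}. G t)"
    unfolding FA1_def using int Gint pw by (intro set_integral_mono) auto
  also have "\<dots> = C * (pi/b)" unfolding G_def using Aprime_integral(2)[OF b s] by simp
  finally show ?thesis using int unfolding C_def s_def by (simp add: ac_simps)
qed



lemma lower_main:
  fixes f :: "real \<Rightarrow> real" and a b c r :: real
  assumes f_pos: "\<forall>t>0. f t > 0"
    and f_noninc: "\<forall>s t. 0 < s \<longrightarrow> s \<le> t \<longrightarrow> f t \<le> f s"
    and a: "a \<ge> 0" and b: "b > 0" and c: "c > 0"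
    and t2f_nondec: "\<forall>s t. 0 < s \<longrightarrow> s \<le> t \<longrightarrow> s\<^sup>2 * f s \<le> t\<^sup>2 * f t"
    and r: "r \<ge> 1" and int: "set_integrable lborel {0<..} (integrandA1 a b c f r)"
  shows "exp (-(2*b/c*r)) * f (r/(b*c)) * (r/(b*c)) powr (1/2-a) *
     ((1 + 1/sqrt (b/c)) powr (-a) / (1 + 1/sqrt (b/c))^2 * exp (-1) / b) \<le> FA1 a b c f r"
proof -
  define s where "s = r/(b*c)"
  have s: "s > 0" unfolding s_def using r b c by simp
  define q where "q = sqrt (b/c)"
  have q: "q > 0" unfolding q_def using b c by simp
  define D where "D = 1 + 1/q"
  have D: "D \<ge> 1" unfolding D_def using q by simp
  define \<delta> where "\<delta> = sqrt s / b"
  have \<delta>: "\<delta> > 0" unfolding \<delta>_def using s b by simp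
  have \<delta>q: "\<delta> * q = sqrt r / (b*c)"
  proof -
    have "\<delta> * q = (sqrt s * sqrt (b/c)) / b" unfolding \<delta>_def q_def by (rule times_divide_eq_left)
    also have "sqrt s * sqrt (b/c) = sqrt (s * (b/c))" by (rule real_sqrt_mult[symmetric])
    also have "s * (b/c) = r / c^2" unfolding s_def using b c by (simp add: field_simps power2_eq_square)
    also have "sqrt (r / c^2) = sqrt r / c" using c by (simp add: real_sqrt_divide)
    finally show ?thesis by (metis divide_divide_eq_left mult.commute)
  qed
  have \<delta>s: "\<delta> \<le> s / q"
  proof -
    have "sqrt r \<le> r" using r by (rule sqrt_le_self)
    hence "\<delta> * q \<le> s" unfolding \<delta>q s_def using b c by (intro divide_right_mono) auto
    thus ?thesis using q by (simp add: pos_le_divide_eq)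
  qed
  define E2 where "E2 = exp (-(2*b/c*r))"
  have E2: "E2 > 0" unfolding E2_def by simp
  define I where "I = {s..s+\<delta>}"
  define k0 where "k0 = E2 * f s * (D powr (-a) * s powr (-a)) * exp (-1) / D^2"
  have fs: "f s > 0" using f_pos s by blast
  have k0: "k0 \<ge> 0" unfolding k0_def
    by (intro divide_nonneg_pos mult_nonneg_nonneg) (use E2 fs D in simp_all)
  have onI: "k0 \<le> integrandA1 a b c f r t" if t: "t \<in> I" for t
  proof -
    have ts: "s \<le> t" "t \<le> s + \<delta>" using t unfolding I_def by auto
    have t0: "t > 0" using ts s by linarith
    have ft0: "f t > 0" using f_pos t0 by blast
    have eq: "integrandA1 a b c f r t = E2 * (t powr (-a) * f t * exp (-(b^2*(t - s)^2/t)))"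
      unfolding s_def E2_def by (rule integrand_eq[OF b c _ t0]) (use r in simp)
    have x1: "b^2*(t - s)^2/t \<le> 1"
    proof -
      have "(t - s)^2 \<le> \<delta>^2" using ts by (intro power_mono) auto
      hence "b^2*(t - s)^2 \<le> b^2 * \<delta>^2" using b by (intro mult_left_mono) auto
      also have "b^2 * \<delta>^2 = s" unfolding \<delta>_def using b s by (simp add: power_divide)
      finally show ?thesis using ts t0 by (simp add: pos_divide_le_eq)
    qed
    have ex: "exp (-1) \<le> exp (-(b^2*(t - s)^2/t))" using x1 by simp
    have tD: "t \<le> D * s"
    proof -
      have "D * s = s + s/q" unfolding D_def by (simp add: algebra_simps)
      thus ?thesis using ts \<delta>s by linarith
    qed
    have pw: "(D * s) powr (-a) \<le> t powr (-a)" by (rule powr_mono2') (use tD t0 a in auto)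
    have pw': "(D * s) powr (-a) = D powr (-a) * s powr (-a)" by (rule powr_mult)
    have fl: "f s / D^2 \<le> f t"
    proof -
      have "s^2 * f s \<le> t^2 * f t" using t2f_nondec s ts by simp
      moreover have "f s * s^2 / t^2 \<le> f t \<longleftrightarrow> f s * s^2 \<le> f t * t^2"
        by (rule pos_divide_le_eq) (use t0 in simp)
      ultimately have "f s * s^2 / t^2 \<le> f t" by (simp add: ac_simps)
      moreover have "f s / D^2 \<le> f s * s^2 / t^2"
      proof -
        have "t^2 \<le> (D * s)^2" using tD t0 by (intro power_mono) auto
        hence "t^2 \<le> D^2 * s^2" by (simp add: power_mult_distrib)
        hence "f s * s^2 / (D^2 * s^2) \<le> f s * s^2 / t^2"
          using fs s t0 D by (intro divide_left_mono) auto
        moreover have "f s * s^2 / (D^2 * s^2) = f s / D^2" using s by simp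
        ultimately show ?thesis by simp
      qed
      ultimately show ?thesis by linarith
    qed
    have "(D powr (-a) * s powr (-a)) * (f s / D^2) * exp (-1) \<le> t powr (-a) * f t * exp (-(b^2*(t - s)^2/t))"
    proof -
      have A: "D powr (-a) * s powr (-a) \<le> t powr (-a)" using pw pw' by simp
      have B: "0 \<le> f s / D^2" using fs by simp
      have "(D powr (-a) * s powr (-a)) * (f s / D^2) \<le> t powr (-a) * f t"
        by (rule mult_mono[OF A fl]) (use B in simp_all)
      moreover have "0 \<le> t powr (-a) * f t" using ft0 by simp
      ultimately show ?thesis by (rule mult_mono[OF _ ex]) simp
    qed
    hence "E2 * ((D powr (-a) * s powr (-a)) * (f s / D^2) * exp (-1)) \<le> integrandA1 a b c f r t"
      unfolding eq using E2 by (intro mult_left_mono) auto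
    thus ?thesis unfolding k0_def by (simp add: ac_simps)
  qed
  define h where "h = (\<lambda>t. indicator I t * k0)"
  have Isub: "I \<subseteq> {0<..}" unfolding I_def using s by auto
  have hind: "(\<lambda>t. indicator {0<..} t *\<^sub>R h t) = (\<lambda>t. k0 * indicator I t)"
    unfolding h_def using Isub by (auto simp: fun_eq_iff indicator_def)
  have Imeas: "emeasure lborel I < \<infinity>" unfolding I_def by (simp add: emeasure_lborel_Icc_eq)
  have hint: "set_integrable lborel {0<..} h" unfolding set_integrable_def hind
    using Imeas by (intro integrable_mult_right) (auto simp: I_def)
  have "(LBINT t:{0<..}. h t) \<le> FA1 a b c f r"
    unfolding FA1_def
  proof (rule set_integral_mono[OF hint int])
    fix t :: real assume t: "t \<in> {0<..}"
    show "h t \<le> integrandA1 a b c f r t"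
    proof (cases "t \<in> I")
      case True then show ?thesis using onI unfolding h_def by simp
    next
      case False
      have "f t > 0" using f_pos t by blast
      then have "0 \<le> integrandA1 a b c f r t" unfolding integrandA1_def by simp
      then show ?thesis using False unfolding h_def by simp
    qed
  qed
  moreover have "(LBINT t:{0<..}. h t) = k0 * \<delta>"
    unfolding set_lebesgue_integral_def hind using \<delta> by (simp add: I_def)
  moreover have "k0 * \<delta> = E2 * f s * s powr (1/2-a) * (D powr (-a) / D^2 * exp (-1) / b)"
  proof -
    have "s powr (1/2-a) = sqrt s * s powr (-a)" using s
      by (simp add: powr_diff powr_half_sqrt powr_minus_divide)
    then show ?thesis unfolding k0_def \<delta>_def by (simp add: ac_simps)
  qed
  ultimately have "E2 * f s * s powr (1/2-a) * (D powr (-a) / D^2 * exp (-1) / b) \<le> FA1 a b c f r"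
    by simp
  then show ?thesis unfolding E2_def s_def D_def q_def .
qed


theorem lemmaA1:
  fixes f :: "real \<Rightarrow> real" and a b c :: real
  assumes f_pos: "\<forall>t>0. f t > 0"
    and f_noninc: "\<forall>s t. 0 < s \<longrightarrow> s \<le> t \<longrightarrow> f t \<le> f s"
    and a: "a \<ge> 0" and b: "b > 0" and c: "c > 0"
    and t2f_nondec: "\<forall>s t. 0 < s \<longrightarrow> s \<le> t \<longrightarrow> s\<^sup>2 * f s \<le> t\<^sup>2 * f t"
  shows "(\<forall>r>0. set_integrable lborel {0<..} (integrandA1 a b c f r)) \<and>
    (\<exists>C1 C2. C1 > 0 \<and> C2 > 0 \<and>
      (\<forall>r\<ge>1. C1 * (r powr (-a + 1/2) * f (r / (b * c)) * exp (- (2 * b / c * r))) \<le> FA1 a b c f r \<and>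
               FA1 a b c f r \<le> C2 * (r powr (-a + 1/2) * f (r / (b * c)) * exp (- (2 * b / c * r)))))"
proof -
  have int: "\<forall>r>0. set_integrable lborel {0<..} (integrandA1 a b c f r)"
  proof (intro allI impI)
    fix r :: real assume r: "r > 0"
    define L where "L = b^2 * (r/(b*c))"
    have L: "L > 0" using r b c by (simp add: L_def)
    obtain K where K: "K > 0" and HK: "\<forall>s>0. \<forall>t>0. b^2 * s \<ge> L \<longrightarrow>
      t powr (-a) * (if s \<le> t then 1 else s^2/t^2) * exp (-(b^2*(t-s)^2/t)) \<le> K * s powr (1/2-a) * Aprime b s t"
      using core_t[OF L a b] by blast
    show "set_integrable lborel {0<..} (integrandA1 a b c f r)"
      using upper_main[OF f_pos f_noninc a b c t2f_nondec K HK r] L_def by simp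
  qed
  have L: "b/c > 0" using b c by simp
  obtain K where K: "K > 0" and HK: "\<forall>s>0. \<forall>t>0. b^2 * s \<ge> b/c \<longrightarrow>
      t powr (-a) * (if s \<le> t then 1 else s^2/t^2) * exp (-(b^2*(t-s)^2/t)) \<le> K * s powr (1/2-a) * Aprime b s t"
    using core_t[OF L a b] by blast
  define D where "D = 1 + 1/sqrt (b/c)"
  have D: "D > 0" unfolding D_def using b c by (simp add: add_pos_nonneg)
  define M where "M = (b*c) powr (1/2-a)"
  have M: "M > 0" unfolding M_def using b c by simp
  define C1 where "C1 = (D powr (-a) / D^2 * exp (-1) / b) / M"
  define C2 where "C2 = K * (pi/b) / M"
  have C1: "C1 > 0" unfolding C1_def using D M b by simp
  have C2: "C2 > 0" unfolding C2_def using K M b by simp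
  have bounds: "C1 * (r powr (-a + 1/2) * f (r / (b * c)) * exp (- (2 * b / c * r))) \<le> FA1 a b c f r \<and>
               FA1 a b c f r \<le> C2 * (r powr (-a + 1/2) * f (r / (b * c)) * exp (- (2 * b / c * r)))"
    if r: "r \<ge> 1" for r
  proof -
    have r0: "r > 0" using r by simp
    have rL: "b/c \<le> b^2 * (r/(b*c))"
    proof -
      have "b^2 * (r/(b*c)) = (b/c) * r" using b c by (simp add: power2_eq_square field_simps)
      also have "(b/c) * 1 \<le> (b/c) * r" using r L by (intro mult_left_mono) auto
      finally show ?thesis by simp
    qed
    have up: "FA1 a b c f r \<le> exp (-(2*b/c*r)) * f (r/(b*c)) * K * (r/(b*c)) powr (1/2-a) * (pi/b)"
      using upper_main[OF f_pos f_noninc a b c t2f_nondec K HK r0 rL] by blast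
    have lo: "exp (-(2*b/c*r)) * f (r/(b*c)) * (r/(b*c)) powr (1/2-a) *
     ((1 + 1/sqrt (b/c)) powr (-a) / (1 + 1/sqrt (b/c))^2 * exp (-1) / b) \<le> FA1 a b c f r"
      using lower_main[OF f_pos f_noninc a b c t2f_nondec r] int r0 by blast
    have sp: "(r/(b*c)) powr (1/2-a) = r powr (1/2-a) / M" unfolding M_def using r0 b c
      by (simp add: powr_divide)
    have ea: "-a + 1/2 = 1/2 - a" by simp
    define P where "P = r powr (1/2-a) * f (r / (b * c)) * exp (- (2 * b / c * r))"
    have upP: "exp (-(2*b/c*r)) * f (r/(b*c)) * K * (r/(b*c)) powr (1/2-a) * (pi/b) = C2 * P"
      unfolding sp C2_def P_def by (simp add: ac_simps)
    have loP: "exp (-(2*b/c*r)) * f (r/(b*c)) * (r/(b*c)) powr (1/2-a) *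
     ((1 + 1/sqrt (b/c)) powr (-a) / (1 + 1/sqrt (b/c))^2 * exp (-1) / b) = C1 * P"
      unfolding sp C1_def P_def D_def[symmetric] by (simp add: ac_simps)
    show ?thesis unfolding ea P_def[symmetric] using up lo upP loP by simp
  qed
  show ?thesis using int C1 C2 bounds by blast
qed


end
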